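(* Let $X$ be a Banach lattice and $F_1,F_2\colon X^*\to\mathbb R\cup\{+\infty\}$ two proper functions such that $F_2\ll_{\mathrm Q}F_1$. Then $F_1^*\ll_{\mathrm P}F_2^*$. In particular, if $F\colon X^*\to\mathbb R\cup\{+\infty\}$ is a proper substitutable function, then $F^*\colon X\to\mathbb R\cup\{+\infty\}$ is submodular.
   Context: A Banach lattice is a Banach space with a lattice partial order (inf/sup $\wedge,\vee$) compatible with addition and nonnegative scaling and with $|\phi_1|\leq|\phi_2|\Rightarrow\|\phi_1\|\leq\|\phi_2\|$ ($\phi^+=\phi\vee0$, $\phi^-=-(\phi\wedge0)$, $|\phi|=\phi^++\phi^-$). $X^*$ carries the dual order ($\mu\leq\nu$ iff $\langle\mu,\phi\rangle\leq\langle\nu,\phi\rangle$ for all $\phi\geq0$); $[a,b]=\{m:a\leq m\leq b\}$. For $F\colon X^*\to\mathbb R\cup\{+\infty\}$, $F^*(\phi)=\sup_{\mu\in X^*}\langle\mu,\phi\rangle-F(\mu)$, $\phi\in X$. $F_2\ll_{\mathrm Q}F_1$ means: for all $\mu_1,\mu_2\in X^*$ and every $t_{21}\in[0,(\mu_2-\mu_1)^+]$ there exists $t_{12}\in[0,(\mu_1-\mu_2)^+]$ with $F_1(\mu_1+t_{21}-t_{12})+F_2(\mu_2-t_{21}+t_{12})\leq F_1(\mu_1)+F_2(\mu_2)$; substitutable means $F\ll_{\mathrm Q}F$. For $E_1,E_2$ on $X$, $E_1\ll_{\mathrm P}E_2$ means $E_1(\phi_1\wedge\phi_2)+E_2(\phi_1\vee\phi_2)\leq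 E_1(\phi_1)+E_2(\phi_2)$ for all $\phi_1,\phi_2$; submodular means $E\ll_{\mathrm P}E$. *)

theory Defs
  imports "HOL-Analysis.Analysis" "HOL-Library.Extended_Real"
begin

definition lat_pos :: "'a::{real_normed_vector,lattice} \<Rightarrow> 'a" where
  "lat_pos x = sup x 0"

definition lat_neg :: "'a::{real_normed_vector,lattice} \<Rightarrow> 'a" where
  "lat_neg x = - (inf x 0)"

definition lat_abs :: "'a::{real_normed_vector,lattice} \<Rightarrow> 'a" where
  "lat_abs x = lat_pos x + lat_neg x"

definition banach_lattice :: "'a::{banach,lattice} itself \<Rightarrow> bool" where
  "banach_lattice _ \<longleftrightarrow>
     (\<forall>x y z :: 'a. x \<le> y \<longrightarrow> x + z \<le> y + z) \<and>
     (\<forall>(x::'a) y (c::real). x \<le> y \<and> 0 \<le> c \<longrightarrow> c *\<^sub>R x \<le> c *\<^sub>R y) \<and>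
     (\<forall>x y :: 'a. lat_abs x \<le> lat_abs y \<longrightarrow> norm x \<le> norm y)"

definition dual_le :: "('a::{real_normed_vector,lattice} \<Rightarrow>\<^sub>L real) \<Rightarrow> ('a \<Rightarrow>\<^sub>L real) \<Rightarrow> bool" where
  "dual_le \<mu> \<nu> \<longleftrightarrow> (\<forall>\<phi>. 0 \<le> \<phi> \<longrightarrow> blinfun_apply \<mu> \<phi> \<le> blinfun_apply \<nu> \<phi>)"

definition dual_pos :: "('a::{real_normed_vector,lattice} \<Rightarrow>\<^sub>L real) \<Rightarrow> ('a \<Rightarrow>\<^sub>L real)" where
  "dual_pos \<mu> = (THE \<nu>. dual_le \<mu> \<nu> \<and> dual_le 0 \<nu> \<and>
                     (\<forall>\<rho>. dual_le \<mu> \<rho> \<and> dual_le 0 \<rho> \<longrightarrow> dual_le \<nu> \<rho>))"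

definition dual_interval :: "('a::{real_normed_vector,lattice} \<Rightarrow>\<^sub>L real) \<Rightarrow> ('a \<Rightarrow>\<^sub>L real) \<Rightarrow> ('a \<Rightarrow>\<^sub>L real) set" where
  "dual_interval a b = {m. dual_le a m \<and> dual_le m b}"

definition proper_fun :: "('b \<Rightarrow> ereal) \<Rightarrow> bool" where
  "proper_fun F \<longleftrightarrow> (\<forall>\<mu>. F \<mu> \<noteq> -\<infinity>) \<and> (\<exists>\<mu>. F \<mu> \<noteq> \<infinity>)"

definition conj_fun :: "(('a::{real_normed_vector,lattice} \<Rightarrow>\<^sub>L real) \<Rightarrow> ereal) \<Rightarrow> 'a \<Rightarrow> ereal" where
  "conj_fun F \<phi> = (SUP \<mu>. ereal (blinfun_apply \<mu> \<phi>) - F \<mu>)"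

definition Q_ll :: "(('a::{real_normed_vector,lattice} \<Rightarrow>\<^sub>L real) \<Rightarrow> ereal) \<Rightarrow> (('a \<Rightarrow>\<^sub>L real) \<Rightarrow> ereal) \<Rightarrow> bool" where
  "Q_ll F2 F1 \<longleftrightarrow>
     (\<forall>\<mu>1 \<mu>2. \<forall>t21 \<in> dual_interval 0 (dual_pos (\<mu>2 - \<mu>1)).
        \<exists>t12 \<in> dual_interval 0 (dual_pos (\<mu>1 - \<mu>2)).
          F1 (\<mu>1 + t21 - t12) + F2 (\<mu>2 - t21 + t12) \<le> F1 \<mu>1 + F2 \<mu>2)"

definition substitutable :: "(('a::{real_normed_vector,lattice} \<Rightarrow>\<^sub>L real) \<Rightarrow> ereal) \<Rightarrow> bool" where
  "substitutable F \<longleftrightarrow> Q_ll F F"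

definition P_ll :: "('a::lattice \<Rightarrow> ereal) \<Rightarrow> ('a \<Rightarrow> ereal) \<Rightarrow> bool" where
  "P_ll E1 E2 \<longleftrightarrow> (\<forall>\<phi>1 \<phi>2. E1 (inf \<phi>1 \<phi>2) + E2 (sup \<phi>1 \<phi>2) \<le> E1 \<phi>1 + E2 \<phi>2)"

definition submodular :: "('a::lattice \<Rightarrow> ereal) \<Rightarrow> bool" where
  "submodular E \<longleftrightarrow> P_ll E E"

end

theory Submission
  imports Defs
begin

definition ideal_like :: "'a::{real_normed_vector,lattice} set \<Rightarrow> bool" where
  "ideal_like K \<longleftrightarrow> 0 \<in> K \<and> (\<forall>y z. 0 \<le> z \<and> z \<le> y \<and> y \<in> K \<longrightarrow> z \<in> K) \<and> (\<forall>y\<in>K. \<forall>z\<in>K. y + z \<in> K) \<and> (\<forall>y\<in>K. \<forall>c>0. c *\<^sub>R y \<in> K)"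

definition PK :: "('a::{real_normed_vector,lattice} \<Rightarrow>\<^sub>L real) \<Rightarrow> 'a set \<Rightarrow> 'a \<Rightarrow> real" where
  "PK \<nu> K x = Sup ((\<lambda>y. blinfun_apply \<nu> y) ` {y. 0 \<le> y \<and> y \<le> x \<and> y \<in> K})"

definition ext :: "('a::{real_normed_vector,lattice} \<Rightarrow> real) \<Rightarrow> 'a \<Rightarrow> real" where
  "ext P x = P (sup x 0) - P (- inf x 0)"

context
  assumes BL: "banach_lattice TYPE('a::{banach,lattice})"
begin

lemma add_mono_r: "(x::'a) \<le> y \<Longrightarrow> x + z \<le> y + z"
  using BL unfolding banach_lattice_def by blast

lemma scale_mono: "(x::'a) \<le> y \<Longrightarrow> 0 \<le> c \<Longrightarrow> c *\<^sub>R x \<le> c *\<^sub>R y"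
  using BL unfolding banach_lattice_def by blast

lemma abs_norm: "lat_abs (x::'a) \<le> lat_abs y \<Longrightarrow> norm x \<le> norm y"
  using BL unfolding banach_lattice_def by blast

lemma le_iff_diff: "(x::'a) \<le> y \<longleftrightarrow> 0 \<le> y - x"
proof
  assume "x \<le> y" then show "0 \<le> y - x" using add_mono_r[of x y "-x"] by simp
next
  assume "0 \<le> y - x" then show "x \<le> y" using add_mono_r[of 0 "y-x" x] by simp
qed

lemma neg_mono: "(x::'a) \<le> y \<Longrightarrow> - y \<le> - x"
  using add_mono_r[of x y "-x-y"] by (simp add: algebra_simps)

lemma add_mono_l: "(x::'a) \<le> y \<Longrightarrow> z + x \<le> z + y"
  using add_mono_r[of x y z] by (simp add: add.commute)

lemma add_mono2: "(x::'a) \<le> y \<Longrightarrow> u \<le> v \<Longrightarrow> x + u \<le> y + v"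
  using add_mono_r[of x y u] add_mono_l[of u v y] by (meson order_trans)

lemma sup_add: "sup (x::'a) y + z = sup (x + z) (y + z)"
proof (rule antisym)
  have "x \<le> sup (x + z) (y + z) + - z" using add_mono_r[of "x+z" "sup (x + z) (y + z)" "-z"] by simp
  moreover have "y \<le> sup (x + z) (y + z) + - z" using add_mono_r[of "y+z" "sup (x + z) (y + z)" "-z"] by simp
  ultimately have "sup x y \<le> sup (x + z) (y + z) + - z" by simp
  then show "sup x y + z \<le> sup (x + z) (y + z)" using add_mono_r[of _ _ z] by fastforce
  show "sup (x + z) (y + z) \<le> sup x y + z" by (intro sup_least add_mono_r) auto
qed

lemma inf_add: "inf (x::'a) y + z = inf (x + z) (y + z)"
proof (rule antisym)
  have "inf (x + z) (y + z) + - z \<le> x" using add_mono_r[of "inf (x + z) (y + z)" "x+z" "-z"] by simp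
  moreover have "inf (x + z) (y + z) + - z \<le> y" using add_mono_r[of "inf (x + z) (y + z)" "y+z" "-z"] by simp
  ultimately have "inf (x + z) (y + z) + - z \<le> inf x y" by simp
  then show "inf (x + z) (y + z) \<le> inf x y + z" using add_mono_r[of _ _ z] by fastforce
  show "inf x y + z \<le> inf (x + z) (y + z)" by (intro inf_greatest add_mono_r) auto
qed

lemma neg_sup: "- sup (x::'a) y = inf (-x) (-y)"
proof (rule antisym)
  show "- sup x y \<le> inf (- x) (- y)" by (intro inf_greatest neg_mono) auto
  have "x \<le> - inf (- x) (- y)" using neg_mono[of "inf (- x) (- y)" "-x"] by simp
  moreover have "y \<le> - inf (- x) (- y)" using neg_mono[of "inf (- x) (- y)" "-y"] by simp
  ultimately have "sup x y \<le> - inf (- x) (- y)" by simp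
  then show "inf (- x) (- y) \<le> - sup x y" using neg_mono by fastforce
qed

lemma pos_neg: "sup (x::'a) 0 - (- inf x 0) = x"
proof -
  have "sup 0 (-x) + x = sup x 0" using sup_add[of 0 "-x" x] by (simp add: sup.commute)
  moreover have "sup 0 (-x) = - inf x 0" using neg_sup[of 0 "-x"] by (simp add: inf.commute minus_equation_iff)
  ultimately show ?thesis by (metis add_diff_cancel_left' diff_add_cancel)
qed

lemma neg_nonneg: "0 \<le> - inf (x::'a) 0"
  using neg_mono[of "inf x 0" 0] by simp

lemma pos_neg_disj: "inf (sup (x::'a) 0) (- inf x 0) = 0"
proof -
  define n where "n = - inf x 0"
  have p: "sup x 0 = x + n" using pos_neg[of x] unfolding n_def by (metis diff_add_cancel)
  have "inf (sup x 0) n = inf (x + n) (0 + n)" using p by simp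
  also have "\<dots> = inf x 0 + n" using inf_add by simp
  also have "\<dots> = 0" unfolding n_def by simp
  finally show ?thesis unfolding n_def .
qed

lemma lat_abs_pos: "0 \<le> (y::'a) \<Longrightarrow> lat_abs y = y"
  unfolding lat_abs_def lat_pos_def lat_neg_def by (simp add: sup.absorb1 inf.absorb2)

lemma norm_mono: "0 \<le> (y::'a) \<Longrightarrow> y \<le> x \<Longrightarrow> norm y \<le> norm x"
  using abs_norm[of y x] lat_abs_pos[of y] lat_abs_pos[of x] by simp

lemma norm_pos_part: "norm (sup (x::'a) 0) \<le> norm x"
proof -
  have "lat_abs (sup x 0) = sup x 0" by (simp add: lat_abs_pos)
  also have "\<dots> \<le> sup x 0 + (- inf x 0)" using add_mono_l[OF neg_nonneg[of x], of "sup x 0"] by simp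
  finally show ?thesis using abs_norm unfolding lat_abs_def lat_pos_def lat_neg_def by blast
qed

lemma norm_neg_part: "norm (- inf (x::'a) 0) \<le> norm x"
proof -
  have "lat_abs (- inf x 0) = - inf x 0" by (simp add: lat_abs_pos neg_nonneg)
  also have "\<dots> \<le> sup x 0 + (- inf x 0)" using add_mono_r[of 0 "sup x 0" "- inf x 0"] by simp
  finally show ?thesis using abs_norm unfolding lat_abs_def lat_pos_def lat_neg_def by blast
qed


lemma neg_inf: "- inf (x::'a) y = sup (-x) (-y)"
  using neg_sup[of "-x" "-y"] by (simp add: minus_equation_iff)

lemma scale_pos_mono: "0 \<le> (x::'a) \<Longrightarrow> 0 \<le> c \<Longrightarrow> 0 \<le> c *\<^sub>R x"
  using scale_mono[of 0 x c] by simp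

lemma riesz:
  assumes "0 \<le> (y::'a)" "y \<le> x1 + x2" "0 \<le> x1" "0 \<le> x2"
  shows "0 \<le> inf y x1" "inf y x1 \<le> x1" "inf y x1 \<le> y"
        "0 \<le> y - inf y x1" "y - inf y x1 \<le> x2" "y - inf y x1 \<le> y"
proof -
  show "0 \<le> inf y x1" "inf y x1 \<le> x1" "inf y x1 \<le> y" using assms by auto
  show "0 \<le> y - inf y x1" using le_iff_diff[of "inf y x1" y] by simp
  show "y - inf y x1 \<le> y" using le_iff_diff[of "y - inf y x1" y] assms by simp
  have "y - inf y x1 = sup (-y) (-x1) + y" by (simp add: neg_inf[symmetric])
  also have "\<dots> = sup 0 (y - x1)" by (simp add: sup_add)
  also have "\<dots> \<le> x2"
  proof (rule sup_least)
    show "0 \<le> x2" by fact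
    have "0 \<le> x1 + x2 - y" using assms(2) le_iff_diff by blast
    then show "y - x1 \<le> x2" using le_iff_diff[of "y - x1" x2] by (simp add: algebra_simps)
  qed
  finally show "y - inf y x1 \<le> x2" .
qed

lemma PK_bdd:
  assumes "0 \<le> (x::'a)"
  shows "bdd_above ((\<lambda>y. blinfun_apply (\<nu>::'a \<Rightarrow>\<^sub>L real) y) ` {y. 0 \<le> y \<and> y \<le> x \<and> y \<in> K})"
proof (rule bdd_aboveI2)
  fix y assume "y \<in> {y. 0 \<le> y \<and> y \<le> x \<and> y \<in> K}"
  then have y: "0 \<le> y" "y \<le> x" by auto
  have "blinfun_apply \<nu> y \<le> norm (blinfun_apply \<nu> y)" by simp
  also have "\<dots> \<le> norm \<nu> * norm y" by (rule norm_blinfun)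
  also have "\<dots> \<le> norm \<nu> * norm x" using norm_mono[OF y] by (simp add: mult_left_mono)
  finally show "blinfun_apply \<nu> y \<le> norm \<nu> * norm x" .
qed

lemma PK_upper:
  assumes "0 \<le> (y::'a)" "y \<le> x" "y \<in> K"
  shows "blinfun_apply \<nu> y \<le> PK \<nu> K x"
  unfolding PK_def
  by (rule cSup_upper) (use assms PK_bdd[of x \<nu> K] in auto)

lemma PK_least:
  assumes "0 \<in> K" "0 \<le> (x::'a)" "\<And>y. 0 \<le> y \<Longrightarrow> y \<le> x \<Longrightarrow> y \<in> K \<Longrightarrow> blinfun_apply \<nu> y \<le> B"
  shows "PK \<nu> K x \<le> B"
  unfolding PK_def
  by (rule cSup_least) (use assms in auto)

lemma PK_nonneg:
  assumes "ideal_like K" "0 \<le> (x::'a)"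
  shows "0 \<le> PK \<nu> K x"
  using PK_upper[of 0 x K \<nu>] assms unfolding ideal_like_def by simp

lemma PK_bound:
  assumes "ideal_like K" "0 \<le> (x::'a)"
  shows "PK \<nu> K x \<le> norm \<nu> * norm x"
proof (rule PK_least)
  show "0 \<in> K" using assms unfolding ideal_like_def by simp
  show "0 \<le> x" by fact
  fix y assume y: "0 \<le> y" "y \<le> x"
  have "blinfun_apply \<nu> y \<le> norm (blinfun_apply \<nu> y)" by simp
  also have "\<dots> \<le> norm \<nu> * norm y" by (rule norm_blinfun)
  also have "\<dots> \<le> norm \<nu> * norm x" using norm_mono[OF y] by (simp add: mult_left_mono)
  finally show "blinfun_apply \<nu> y \<le> norm \<nu> * norm x" .
qed

lemma PK_add:
  assumes K: "ideal_like K" and x: "0 \<le> (x1::'a)" "0 \<le> x2"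
  shows "PK \<nu> K (x1 + x2) = PK \<nu> K x1 + PK \<nu> K x2"
proof (rule antisym)
  have K0: "0 \<in> K" and Kd: "\<And>y z. 0 \<le> z \<Longrightarrow> z \<le> y \<Longrightarrow> y \<in> K \<Longrightarrow> z \<in> K"
    and Ka: "\<And>y z. y \<in> K \<Longrightarrow> z \<in> K \<Longrightarrow> y + z \<in> K" using K unfolding ideal_like_def by blast+
  have x12: "0 \<le> x1 + x2" using add_mono2[OF x] by simp
  show "PK \<nu> K (x1 + x2) \<le> PK \<nu> K x1 + PK \<nu> K x2"
  proof (rule PK_least[OF K0 x12])
    fix y assume y: "0 \<le> y" "y \<le> x1 + x2" "y \<in> K"
    note r = riesz[OF y(1,2) x]
    have "blinfun_apply \<nu> y = blinfun_apply \<nu> (inf y x1) + blinfun_apply \<nu> (y - inf y x1)"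
      by (simp add: blinfun.diff_right)
    also have "\<dots> \<le> PK \<nu> K x1 + PK \<nu> K x2"
      by (intro add_mono PK_upper) (use r y Kd in blast)+
    finally show "blinfun_apply \<nu> y \<le> PK \<nu> K x1 + PK \<nu> K x2" .
  qed
  have "PK \<nu> K x1 \<le> PK \<nu> K (x1 + x2) - PK \<nu> K x2"
  proof (rule PK_least[OF K0 x(1)])
    fix y1 assume y1: "0 \<le> y1" "y1 \<le> x1" "y1 \<in> K"
    have "PK \<nu> K x2 \<le> PK \<nu> K (x1 + x2) - blinfun_apply \<nu> y1"
    proof (rule PK_least[OF K0 x(2)])
      fix y2 assume y2: "0 \<le> y2" "y2 \<le> x2" "y2 \<in> K"
      have "blinfun_apply \<nu> (y1 + y2) \<le> PK \<nu> K (x1 + x2)"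
        by (rule PK_upper) (use y1 y2 add_mono2[of 0 y1 0 y2] add_mono2[of y1 x1 y2 x2] Ka in auto)
      then show "blinfun_apply \<nu> y2 \<le> PK \<nu> K (x1 + x2) - blinfun_apply \<nu> y1"
        by (simp add: blinfun.add_right)
    qed
    then show "blinfun_apply \<nu> y1 \<le> PK \<nu> K (x1 + x2) - PK \<nu> K x2" by simp
  qed
  then show "PK \<nu> K x1 + PK \<nu> K x2 \<le> PK \<nu> K (x1 + x2)" by simp
qed

lemma PK_scale_le:
  assumes K: "ideal_like K" and x: "0 \<le> (x::'a)" and c: "c > 0"
  shows "PK \<nu> K (c *\<^sub>R x) \<le> c * PK \<nu> K x"
proof (rule PK_least)
  show "0 \<in> K" using K unfolding ideal_like_def by simp
  show "0 \<le> c *\<^sub>R x" using scale_pos_mono x c by simp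
  fix y assume y: "0 \<le> y" "y \<le> c *\<^sub>R x" "y \<in> K"
  have "(1/c) *\<^sub>R y \<in> K" using K y c unfolding ideal_like_def by simp
  moreover have "0 \<le> (1/c) *\<^sub>R y" using scale_pos_mono y c by simp
  moreover have "(1/c) *\<^sub>R y \<le> x" using scale_mono[OF y(2), of "1/c"] c by simp
  ultimately have "blinfun_apply \<nu> ((1/c) *\<^sub>R y) \<le> PK \<nu> K x" using PK_upper by blast
  then have "c * blinfun_apply \<nu> ((1/c) *\<^sub>R y) \<le> c * PK \<nu> K x" using c by simp
  then show "blinfun_apply \<nu> y \<le> c * PK \<nu> K x" using c by (simp add: blinfun.scaleR_right)
qed

lemma PK_scale:
  assumes K: "ideal_like K" and x: "0 \<le> (x::'a)" and c: "c > 0"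
  shows "PK \<nu> K (c *\<^sub>R x) = c * PK \<nu> K x"
proof (rule antisym)
  show "PK \<nu> K (c *\<^sub>R x) \<le> c * PK \<nu> K x" by (rule PK_scale_le[OF assms])
  have cx: "0 \<le> c *\<^sub>R x" using scale_pos_mono x c by simp
  have "PK \<nu> K ((1/c) *\<^sub>R (c *\<^sub>R x)) \<le> (1/c) * PK \<nu> K (c *\<^sub>R x)"
    using PK_scale_le[OF K cx, of "1/c"] c by simp
  then have "PK \<nu> K x \<le> (1/c) * PK \<nu> K (c *\<^sub>R x)" using c by simp
  then show "c * PK \<nu> K x \<le> PK \<nu> K (c *\<^sub>R x)" using c by (simp add: field_simps)
qed

lemma ext_key:
  assumes add: "\<And>x y. 0 \<le> (x::'a) \<Longrightarrow> 0 \<le> y \<Longrightarrow> P (x + y) = P x + P y"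
    and ab: "0 \<le> a" "0 \<le> b"
  shows "ext P (a - b) = P a - P b"
proof -
  define x where "x = a - b"
  have "sup x 0 + b = a + (- inf x 0)" using pos_neg[of x] unfolding x_def
    by (metis add.commute diff_add_eq diff_eq_eq)
  then have "P (sup x 0 + b) = P (a + (- inf x 0))" by simp
  then have "P (sup x 0) + P b = P a + P (- inf x 0)"
    using add[of "sup x 0" b] add[of a "- inf x 0"] ab neg_nonneg[of x] by simp
  then show ?thesis unfolding ext_def x_def[symmetric] by simp
qed

lemma ext_bl:
  assumes add: "\<And>x y. 0 \<le> (x::'a) \<Longrightarrow> 0 \<le> y \<Longrightarrow> P (x + y) = P x + P y"
    and sc: "\<And>c x. 0 \<le> (x::'a) \<Longrightarrow> c > 0 \<Longrightarrow> P (c *\<^sub>R x) = c * P x"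
    and bd: "\<And>x. 0 \<le> (x::'a) \<Longrightarrow> \<bar>P x\<bar> \<le> B * norm x" and B: "0 \<le> B"
  shows "bounded_linear (ext P)" "\<And>x. 0 \<le> x \<Longrightarrow> ext P x = P x"
proof -
  have P0: "P 0 = 0" using add[of 0 0] by simp
  have key: "\<And>a b. 0 \<le> a \<Longrightarrow> 0 \<le> b \<Longrightarrow> ext P (a - b) = P a - P b" using ext_key add by blast
  note pn = pos_neg neg_nonneg
  show "\<And>x. 0 \<le> x \<Longrightarrow> ext P x = P x" using key[of _ 0] P0 by simp
  show "bounded_linear (ext P)"
  proof (rule bounded_linear_intro)
    fix x y :: 'a
    have "(sup x 0 + sup y 0) - ((- inf x 0) + (- inf y 0)) = (sup x 0 - - inf x 0) + (sup y 0 - - inf y 0)"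
      by (simp add: algebra_simps)
    then have "x + y = (sup x 0 + sup y 0) - ((- inf x 0) + (- inf y 0))"
      by (simp only: pos_neg)
    then have "ext P (x + y) = P (sup x 0 + sup y 0) - P ((- inf x 0) + (- inf y 0))"
    proof -
      have "0 \<le> sup x 0 + sup y 0" using add_mono2[of 0 "sup x 0" 0 "sup y 0"] by simp
      moreover have "0 \<le> (- inf x 0) + (- inf y 0)" using add_mono2[OF neg_nonneg[of x] neg_nonneg[of y]] by simp
      ultimately show ?thesis using key \<open>x + y = _\<close> by simp
    qed
    then show "ext P (x + y) = ext P x + ext P y"
      unfolding ext_def using add[OF neg_nonneg[of x] neg_nonneg[of y]] add[of "sup x 0" "sup y 0"] by simp
  next
    fix r :: real and x :: 'a
    show "ext P (r *\<^sub>R x) = r *\<^sub>R ext P x"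
    proof (cases "r > 0")
      case True
      have "r *\<^sub>R x = r *\<^sub>R sup x 0 - r *\<^sub>R (- inf x 0)"
        using pos_neg[of x] by (metis scaleR_right_diff_distrib)
      then have "ext P (r *\<^sub>R x) = P (r *\<^sub>R sup x 0) - P (r *\<^sub>R (- inf x 0))"
        using key scale_pos_mono neg_nonneg True by (metis less_eq_real_def sup.cobounded2)
      then show ?thesis using sc[OF neg_nonneg[of x] True] sc[of "sup x 0" r] True unfolding ext_def by (simp add: algebra_simps)
    next
      case False
      show ?thesis
      proof (cases "r = 0")
        case True then show ?thesis using P0 unfolding ext_def by simp
      next
        case False
        with \<open>\<not> r > 0\<close> have r: "-r > 0" by simp
        have "r *\<^sub>R x = (-r) *\<^sub>R (- inf x 0) - (-r) *\<^sub>R sup x 0"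
          using pos_neg[of x] by (metis minus_diff_eq scaleR_minus_left scaleR_right_diff_distrib)
        then have "ext P (r *\<^sub>R x) = P ((-r) *\<^sub>R (- inf x 0)) - P ((-r) *\<^sub>R sup x 0)"
          using key scale_pos_mono neg_nonneg r by (metis less_eq_real_def sup.cobounded2)
        then show ?thesis using sc[OF neg_nonneg[of x] r] sc[of "sup x 0" "-r"] r unfolding ext_def by (simp add: algebra_simps)
      qed
    qed
  next
    fix x :: 'a
    have "norm (ext P x) \<le> \<bar>P (sup x 0)\<bar> + \<bar>P (- inf x 0)\<bar>" unfolding ext_def by simp
    also have "\<dots> \<le> B * norm (sup x 0) + B * norm (- inf x 0)"
      by (intro add_mono bd neg_nonneg) simp
    also have "\<dots> \<le> B * norm x + B * norm x"
    proof -
      show ?thesis using mult_left_mono[OF norm_pos_part[of x] B] mult_left_mono[OF norm_neg_part[of x] B]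
        by simp
    qed
    finally show "norm (ext P x) \<le> norm x * (2 * B)" by (simp add: algebra_simps)
  qed
qed


lemma ideal_UNIV: "ideal_like (UNIV::'a set)"
  unfolding ideal_like_def by simp

definition Kp :: "'a \<Rightarrow> 'a set" where "Kp p = {y. \<exists>s\<ge>0. y \<le> s *\<^sub>R p}"

lemma ideal_Kp: assumes "0 \<le> (p::'a)" shows "ideal_like (Kp p)"
  unfolding ideal_like_def Kp_def
proof (intro conjI allI impI ballI)
  show "0 \<in> {y. \<exists>s\<ge>0. y \<le> s *\<^sub>R p}" by (auto intro: exI[of _ 0])
  fix y z :: 'a
  assume "0 \<le> z \<and> z \<le> y \<and> y \<in> {y. \<exists>s\<ge>0. y \<le> s *\<^sub>R p}"
  then show "z \<in> {y. \<exists>s\<ge>0. y \<le> s *\<^sub>R p}" by (auto intro: order_trans)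
next
  fix y z :: 'a
  assume "y \<in> {y. \<exists>s\<ge>0. y \<le> s *\<^sub>R p}" "z \<in> {y. \<exists>s\<ge>0. y \<le> s *\<^sub>R p}"
  then obtain s t where "s \<ge> 0" "y \<le> s *\<^sub>R p" "t \<ge> 0" "z \<le> t *\<^sub>R p" by auto
  then have "y + z \<le> (s + t) *\<^sub>R p" using add_mono2 by (simp add: scaleR_add_left)
  then show "y + z \<in> {y. \<exists>s\<ge>0. y \<le> s *\<^sub>R p}" using \<open>s \<ge> 0\<close> \<open>t \<ge> 0\<close>
    by (auto intro!: exI[of _ "s+t"])
next
  fix y :: 'a and c :: real
  assume "y \<in> {y. \<exists>s\<ge>0. y \<le> s *\<^sub>R p}" "c > 0"
  then obtain s where "s \<ge> 0" "y \<le> s *\<^sub>R p" by auto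
  then have "c *\<^sub>R y \<le> (c * s) *\<^sub>R p" using scale_mono[of y "s *\<^sub>R p" c] \<open>c > 0\<close> by simp
  then show "c *\<^sub>R y \<in> {y. \<exists>s\<ge>0. y \<le> s *\<^sub>R p}" using \<open>s \<ge> 0\<close> \<open>c > 0\<close>
    by (auto intro!: exI[of _ "c * s"])
qed

lemma scale_ge_self: "0 \<le> (x::'a) \<Longrightarrow> 1 \<le> c \<Longrightarrow> x \<le> c *\<^sub>R x"
  using scale_pos_mono[of x "c - 1"] le_iff_diff[of x "c *\<^sub>R x"] by (simp add: scaleR_diff_left)

lemma disj_zero:
  assumes "0 \<le> (y::'a)" "y \<le> n" "y \<le> s *\<^sub>R p" "0 \<le> s" "inf p n = 0" "0 \<le> p" "0 \<le> n"
  shows "y = 0"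
proof -
  define c where "c = max 1 s"
  have c: "c \<ge> 1" "c > 0" unfolding c_def by auto
  have "y \<le> c *\<^sub>R n" using assms(2) scale_ge_self[OF assms(7) c(1)] by (rule order_trans)
  moreover have "s *\<^sub>R p \<le> c *\<^sub>R p"
    using le_iff_diff[of "s *\<^sub>R p" "c *\<^sub>R p"] scale_pos_mono[OF assms(6), of "c - s"]
    unfolding c_def by (simp add: scaleR_diff_left)
  then have "y \<le> c *\<^sub>R p" using assms(3) by (rule order_trans[rotated])
  ultimately have "(1/c) *\<^sub>R y \<le> n" "(1/c) *\<^sub>R y \<le> p"
    using scale_mono[of y "c *\<^sub>R n" "1/c"] scale_mono[of y "c *\<^sub>R p" "1/c"] c by auto
  then have "(1/c) *\<^sub>R y \<le> inf p n" by simp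
  then have "(1/c) *\<^sub>R y \<le> 0" using assms(5) by simp
  then have "c *\<^sub>R ((1/c) *\<^sub>R y) \<le> 0" using scale_mono[of "(1/c) *\<^sub>R y" 0 c] c by simp
  then have "y \<le> 0" using c by simp
  then show ?thesis using assms(1) by simp
qed

definition LK :: "('a \<Rightarrow>\<^sub>L real) \<Rightarrow> 'a set \<Rightarrow> ('a \<Rightarrow>\<^sub>L real)" where
  "LK \<nu> K = Blinfun (ext (PK \<nu> K))"

lemma LK_apply:
  assumes K: "ideal_like K" and x: "0 \<le> (x::'a)"
  shows "blinfun_apply (LK \<nu> K) x = PK \<nu> K x"
proof -
  have add: "\<And>x y. 0 \<le> (x::'a) \<Longrightarrow> 0 \<le> y \<Longrightarrow> PK \<nu> K (x + y) = PK \<nu> K x + PK \<nu> K y"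
    using PK_add[OF K] by blast
  have sc: "\<And>c x. 0 \<le> (x::'a) \<Longrightarrow> c > 0 \<Longrightarrow> PK \<nu> K (c *\<^sub>R x) = c * PK \<nu> K x"
    using PK_scale[OF K] by blast
  have bd: "\<And>x. 0 \<le> (x::'a) \<Longrightarrow> \<bar>PK \<nu> K x\<bar> \<le> norm \<nu> * norm x"
    using PK_nonneg[OF K] PK_bound[OF K] by (metis abs_of_nonneg)
  have e1: "bounded_linear (ext (PK \<nu> K))"
    apply (rule ext_bl(1)[where B="norm \<nu>"]) using add sc bd by auto
  have e2: "ext (PK \<nu> K) x = PK \<nu> K x"
    apply (rule ext_bl(2)[where B="norm \<nu>"]) using add sc bd x by auto
  show ?thesis unfolding LK_def using e2 bounded_linear_Blinfun_apply[OF e1] by simp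
qed

lemma blinfun_pn: "blinfun_apply (m::'a \<Rightarrow>\<^sub>L real) x = m (sup x 0) - m (- inf x 0)"
proof -
  have "m x = m (sup x 0 - - inf x 0)" by (simp only: pos_neg)
  then show ?thesis by (simp only: blinfun.diff_right)
qed

lemma dual_antisym: "dual_le a b \<Longrightarrow> dual_le b a \<Longrightarrow> (a::'a \<Rightarrow>\<^sub>L real) = b"
proof (rule blinfun_eqI)
  fix x :: 'a
  assume "dual_le a b" "dual_le b a"
  then have "\<And>y. 0 \<le> y \<Longrightarrow> a y = b y" unfolding dual_le_def by (meson antisym)
  then show "a x = b x" using blinfun_pn[of a x] blinfun_pn[of b x] neg_nonneg[of x] by simp
qed

lemma dual_pos_props:
  fixes \<nu> :: "'a \<Rightarrow>\<^sub>L real"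
  shows "dual_le \<nu> (dual_pos \<nu>)" "dual_le 0 (dual_pos \<nu>)"
    "\<And>\<rho>. dual_le \<nu> \<rho> \<Longrightarrow> dual_le 0 \<rho> \<Longrightarrow> dual_le (dual_pos \<nu>) \<rho>"
proof -
  let ?Q = "\<lambda>m. dual_le \<nu> m \<and> dual_le 0 m \<and> (\<forall>\<rho>. dual_le \<nu> \<rho> \<and> dual_le 0 \<rho> \<longrightarrow> dual_le m \<rho>)"
  define L where "L = LK \<nu> UNIV"
  have La: "\<And>x. 0 \<le> x \<Longrightarrow> L x = PK \<nu> UNIV x" unfolding L_def using LK_apply[OF ideal_UNIV] by blast
  have "?Q L"
  proof (intro conjI allI impI)
    show "dual_le \<nu> L" unfolding dual_le_def using La PK_upper by simp
    show "dual_le 0 L" unfolding dual_le_def using La PK_nonneg[OF ideal_UNIV] by simp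
    fix \<rho> assume r: "dual_le \<nu> \<rho> \<and> dual_le 0 \<rho>"
    show "dual_le L \<rho>" unfolding dual_le_def
    proof (intro allI impI)
      fix x :: 'a assume x: "0 \<le> x"
      have "PK \<nu> UNIV x \<le> \<rho> x"
      proof (rule PK_least)
        show "0 \<in> (UNIV::'a set)" by simp
        show "0 \<le> x" by fact
        fix y assume y: "0 \<le> y" "y \<le> x"
        have "\<nu> y \<le> \<rho> y" using r y unfolding dual_le_def by simp
        also have "0 \<le> \<rho> (x - y)" using r y le_iff_diff unfolding dual_le_def by auto
        then have "\<rho> y \<le> \<rho> x" by (simp add: blinfun.diff_right)
        finally show "\<nu> y \<le> \<rho> x" .
      qed
      then show "L x \<le> \<rho> x" using La x by simp
    qed
  qed
  moreover have "\<And>m. ?Q m \<Longrightarrow> m = L" using \<open>?Q L\<close> dual_antisym by blast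
  ultimately have "?Q (THE m. ?Q m)" by (rule theI)
  then show "dual_le \<nu> (dual_pos \<nu>)" "dual_le 0 (dual_pos \<nu>)"
    "\<And>\<rho>. dual_le \<nu> \<rho> \<Longrightarrow> dual_le 0 \<rho> \<Longrightarrow> dual_le (dual_pos \<nu>) \<rho>"
    unfolding dual_pos_def by blast+
qed


lemma key_ineq:
  fixes F1 F2 :: "('a \<Rightarrow>\<^sub>L real) \<Rightarrow> ereal" and \<mu>1 \<mu>2 :: "'a \<Rightarrow>\<^sub>L real" and \<phi>1 \<phi>2 :: 'a
  assumes Q: "Q_ll F2 F1" and P1: "proper_fun F1" and P2: "proper_fun F2"
    and r1: "F1 \<mu>1 = ereal r1" and r2: "F2 \<mu>2 = ereal r2"
  shows "ereal (\<mu>1 (inf \<phi>1 \<phi>2) - r1 + (\<mu>2 (sup \<phi>1 \<phi>2) - r2)) \<le> conj_fun F1 \<phi>1 + conj_fun F2 \<phi>2"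
proof -
  define \<nu> where "\<nu> = \<mu>2 - \<mu>1"
  define f where "f = dual_pos \<nu>"
  define g where "g = dual_pos (\<mu>1 - \<mu>2)"
  define \<psi> where "\<psi> = \<phi>1 - \<phi>2"
  define p where "p = sup \<psi> 0"
  define n where "n = - inf \<psi> 0"
  have p0: "0 \<le> p" unfolding p_def by simp
  have n0: "0 \<le> n" unfolding n_def by (rule neg_nonneg)
  have pn: "inf p n = 0" unfolding p_def n_def by (rule pos_neg_disj)
  have psi: "\<psi> = p - n" unfolding p_def n_def using pos_neg by simp
  have f0: "dual_le 0 f" and fnu: "dual_le \<nu> f" unfolding f_def using dual_pos_props by auto
  have g0: "dual_le 0 g" unfolding g_def using dual_pos_props by auto
  have gle: "dual_le g (f - \<nu>)" unfolding g_def
  proof (rule dual_pos_props(3))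
    show "dual_le (\<mu>1 - \<mu>2) (f - \<nu>)" using f0 unfolding dual_le_def \<nu>_def
      by (simp add: blinfun.diff_left)
    show "dual_le 0 (f - \<nu>)" using fnu unfolding dual_le_def by (simp add: blinfun.diff_left)
  qed
  have K: "ideal_like (Kp p)" using ideal_Kp[OF p0] .
  define t21 where "t21 = LK f (Kp p)"
  have ta: "\<And>x. 0 \<le> x \<Longrightarrow> t21 x = PK f (Kp p) x" unfolding t21_def using LK_apply[OF K] by blast
  have fmono: "\<And>y x. 0 \<le> y \<Longrightarrow> y \<le> x \<Longrightarrow> f y \<le> f x"
  proof -
    fix y x :: 'a assume "0 \<le> y" "y \<le> x"
    then have "0 \<le> f (x - y)" using f0 le_iff_diff unfolding dual_le_def by auto
    then show "f y \<le> f x" by (simp add: blinfun.diff_right)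
  qed
  have t21I: "t21 \<in> dual_interval 0 f" unfolding dual_interval_def dual_le_def
  proof (intro CollectI conjI allI impI)
    fix x :: 'a assume x: "0 \<le> x"
    show "blinfun_apply 0 x \<le> t21 x" using ta[OF x] PK_nonneg[OF K x] by simp
    have "PK f (Kp p) x \<le> f x"
      by (rule PK_least) (use K x fmono in \<open>auto simp: ideal_like_def\<close>)
    then show "t21 x \<le> f x" using ta[OF x] by simp
  qed
  have t21p: "f p \<le> t21 p"
  proof -
    have "p \<in> Kp p" unfolding Kp_def by (auto intro!: exI[of _ 1])
    then show ?thesis using ta[OF p0] PK_upper[of p p "Kp p" f] p0 by simp
  qed
  have t21n: "t21 n \<le> 0"
  proof -
    have "PK f (Kp p) n \<le> 0"
    proof (rule PK_least)
      show "0 \<in> Kp p" "0 \<le> n" using K n0 unfolding ideal_like_def by auto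
      fix y assume y: "0 \<le> y" "y \<le> n" "y \<in> Kp p"
      then obtain s where "s \<ge> 0" "y \<le> s *\<^sub>R p" unfolding Kp_def by auto
      then have "y = 0" using disj_zero[OF y(1,2) _ _ pn p0 n0] by blast
      then show "f y \<le> 0" by simp
    qed
    then show ?thesis using ta[OF n0] by simp
  qed
  have t21psi: "f p \<le> t21 \<psi>" using t21p t21n psi by (simp add: blinfun.diff_right)
  have "t21 \<in> dual_interval 0 (dual_pos (\<mu>2 - \<mu>1))" using t21I unfolding f_def \<nu>_def .
  then obtain t12 where t12I: "t12 \<in> dual_interval 0 g"
    and ineq: "F1 (\<mu>1 + t21 - t12) + F2 (\<mu>2 - t21 + t12) \<le> F1 \<mu>1 + F2 \<mu>2"
    using Q unfolding Q_ll_def g_def by blast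
  have t12psi: "t12 \<psi> \<le> g p"
  proof -
    have "0 \<le> t12 n" using t12I n0 unfolding dual_interval_def dual_le_def by auto
    moreover have "t12 p \<le> g p" using t12I p0 unfolding dual_interval_def dual_le_def by auto
    ultimately show ?thesis using psi by (simp add: blinfun.diff_right)
  qed
  have nup: "\<nu> p \<le> f p - g p"
  proof -
    have "g p \<le> f p - \<nu> p" using gle p0 unfolding dual_le_def by (simp add: blinfun.diff_left)
    then show ?thesis by linarith
  qed
  define m1 where "m1 = \<mu>1 + t21 - t12"
  define m2 where "m2 = \<mu>2 - t21 + t12"
  have fin1: "F1 m1 \<noteq> -\<infinity>" "F2 m2 \<noteq> -\<infinity>" using P1 P2 unfolding proper_fun_def by auto
  have ineq': "F1 m1 + F2 m2 \<le> ereal (r1 + r2)" using ineq r1 r2 unfolding m1_def m2_def by simp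
  then have "F1 m1 \<noteq> \<infinity>" "F2 m2 \<noteq> \<infinity>" using fin1 by auto
  with fin1 obtain a1 a2 where a1: "F1 m1 = ereal a1" and a2: "F2 m2 = ereal a2"
    by (metis ereal_cases)
  have a12: "a1 + a2 \<le> r1 + r2" using ineq' a1 a2 by simp
  have c1: "ereal (m1 \<phi>1 - a1) \<le> conj_fun F1 \<phi>1"
    unfolding conj_fun_def using SUP_upper[of m1 UNIV "\<lambda>\<mu>. ereal (blinfun_apply \<mu> \<phi>1) - F1 \<mu>"] a1 by simp
  have c2: "ereal (m2 \<phi>2 - a2) \<le> conj_fun F2 \<phi>2"
    unfolding conj_fun_def using SUP_upper[of m2 UNIV "\<lambda>\<mu>. ereal (blinfun_apply \<mu> \<phi>2) - F2 \<mu>"] a2 by simp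
  have infe: "inf \<phi>1 \<phi>2 = \<phi>1 - p"
  proof -
    have "\<phi>1 - p = inf (\<phi>2 - \<phi>1) 0 + \<phi>1" unfolding p_def \<psi>_def by (simp add: neg_sup)
    also have "\<dots> = inf \<phi>2 \<phi>1" by (simp add: inf_add)
    finally show ?thesis by (simp add: inf.commute)
  qed
  have supe: "sup \<phi>1 \<phi>2 = \<phi>2 + p"
  proof -
    have "\<phi>2 + p = sup (\<phi>1 - \<phi>2) 0 + \<phi>2" unfolding p_def \<psi>_def by (simp add: add.commute)
    also have "\<dots> = sup \<phi>1 \<phi>2" by (simp add: sup_add)
    finally show ?thesis by simp
  qed
  have real: "\<mu>1 (inf \<phi>1 \<phi>2) + \<mu>2 (sup \<phi>1 \<phi>2) \<le> m1 \<phi>1 + m2 \<phi>2"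
  proof -
    have "\<mu>1 (inf \<phi>1 \<phi>2) + \<mu>2 (sup \<phi>1 \<phi>2) = \<mu>1 \<phi>1 + \<mu>2 \<phi>2 + \<nu> p"
      unfolding infe supe \<nu>_def by (simp add: blinfun.diff_right blinfun.add_right blinfun.diff_left)
    moreover have "m1 \<phi>1 + m2 \<phi>2 = \<mu>1 \<phi>1 + \<mu>2 \<phi>2 + (t21 \<psi> - t12 \<psi>)"
      unfolding m1_def m2_def \<psi>_def
      by (simp add: blinfun.diff_right blinfun.add_left blinfun.diff_left algebra_simps)
    ultimately show ?thesis using nup t21psi t12psi by linarith
  qed
  have "ereal (\<mu>1 (inf \<phi>1 \<phi>2) - r1 + (\<mu>2 (sup \<phi>1 \<phi>2) - r2)) \<le> ereal (m1 \<phi>1 - a1) + ereal (m2 \<phi>2 - a2)"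
    using real a12 by simp
  also have "\<dots> \<le> conj_fun F1 \<phi>1 + conj_fun F2 \<phi>2" using c1 c2 by (rule add_mono)
  finally show ?thesis .
qed


lemma conj_not_minf:
  assumes "proper_fun F" shows "conj_fun F x \<noteq> -\<infinity>"
proof -
  obtain \<mu>0 where "F \<mu>0 \<noteq> \<infinity>" "F \<mu>0 \<noteq> -\<infinity>" using assms unfolding proper_fun_def by auto
  then obtain r where r: "F \<mu>0 = ereal r" by (metis ereal_cases)
  have "ereal (\<mu>0 x) - F \<mu>0 \<le> conj_fun F x" unfolding conj_fun_def by (rule SUP_upper) simp
  then show ?thesis using r by auto
qed

lemma Pll_main:
  fixes F1 F2 :: "('a \<Rightarrow>\<^sub>L real) \<Rightarrow> ereal"
  assumes Q: "Q_ll F2 F1" and P1: "proper_fun F1" and P2: "proper_fun F2"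
  shows "P_ll (conj_fun F1) (conj_fun F2)"
  unfolding P_ll_def
proof (intro allI)
  fix \<phi>1 \<phi>2 :: 'a
  let ?R = "conj_fun F1 \<phi>1 + conj_fun F2 \<phi>2"
  define f where "f = (\<lambda>\<mu>. ereal (blinfun_apply \<mu> (inf \<phi>1 \<phi>2)) - F1 \<mu>)"
  define g where "g = (\<lambda>\<mu>. ereal (blinfun_apply \<mu> (sup \<phi>1 \<phi>2)) - F2 \<mu>)"
  have A: "conj_fun F1 (inf \<phi>1 \<phi>2) = (SUP \<mu>. f \<mu>)" unfolding conj_fun_def f_def ..
  have B: "conj_fun F2 (sup \<phi>1 \<phi>2) = (SUP \<mu>. g \<mu>)" unfolding conj_fun_def g_def ..
  have fi: "f \<mu> \<noteq> \<infinity>" "g \<mu> \<noteq> \<infinity>" for \<mu>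
    using P1 P2 unfolding proper_fun_def f_def g_def by (cases "F1 \<mu>"; auto; cases "F2 \<mu>"; auto)+
  have pair: "f \<mu>1 + g \<mu>2 \<le> ?R" for \<mu>1 \<mu>2
  proof (cases "F1 \<mu>1 = \<infinity> \<or> F2 \<mu>2 = \<infinity>")
    case True
    then have "f \<mu>1 = -\<infinity> \<or> g \<mu>2 = -\<infinity>" unfolding f_def g_def by auto
    then show ?thesis using fi[of \<mu>1] fi[of \<mu>2] by (cases "f \<mu>1"; cases "g \<mu>2") auto
  next
    case False
    then obtain r1 r2 where r1: "F1 \<mu>1 = ereal r1" and r2: "F2 \<mu>2 = ereal r2"
      using P1 P2 unfolding proper_fun_def by (metis ereal_cases)
    show ?thesis using key_ineq[OF Q P1 P2 r1 r2, of \<phi>1 \<phi>2] r1 r2 unfolding f_def g_def by simp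
  qed
  have Bm: "(SUP \<mu>. g \<mu>) \<noteq> -\<infinity>" using conj_not_minf[OF P2] B by metis
  have step: "f \<mu>1 + (SUP \<mu>. g \<mu>) \<le> ?R" if "f \<mu>1 \<noteq> -\<infinity>" for \<mu>1
  proof -
    have "f \<mu>1 + (SUP \<mu>. g \<mu>) = (SUP \<mu>. f \<mu>1 + g \<mu>)"
      using SUP_ereal_add_right[of UNIV "f \<mu>1" g] that by simp
    also have "\<dots> \<le> ?R" using pair by (intro SUP_least) auto
    finally show ?thesis .
  qed
  have step2: "f \<mu>1 + (SUP \<mu>. g \<mu>) \<le> ?R" for \<mu>1
  proof (cases "f \<mu>1 = -\<infinity>")
    case False then show ?thesis using step by blast
  next
    case True
    show ?thesis
    proof (cases "(SUP \<mu>. g \<mu>) = \<infinity>")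
      case False then show ?thesis using True Bm by (cases "(SUP \<mu>. g \<mu>)") auto
    next
      case inf: True
      obtain \<mu>0 where "F1 \<mu>0 \<noteq> \<infinity>" "F1 \<mu>0 \<noteq> -\<infinity>" using P1 unfolding proper_fun_def by auto
      then have "f \<mu>0 \<noteq> -\<infinity>" unfolding f_def by (cases "F1 \<mu>0") auto
      then have "f \<mu>0 + (SUP \<mu>. g \<mu>) \<le> ?R" by (rule step)
      moreover have "f \<mu>0 + (SUP \<mu>. g \<mu>) = \<infinity>" using inf \<open>f \<mu>0 \<noteq> -\<infinity>\<close> by simp
      ultimately have R: "?R = \<infinity>" by (metis ereal_infty_less_eq(1))
      show ?thesis by (simp only: R) simp
    qed
  qed
  have "(SUP \<mu>. f \<mu>) + (SUP \<mu>. g \<mu>) = (SUP \<mu>. f \<mu> + (SUP \<mu>. g \<mu>))"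
    using SUP_ereal_add_left[of UNIV "SUP \<mu>. g \<mu>" f] Bm by simp
  also have "\<dots> \<le> ?R" using step2 by (intro SUP_least) auto
  finally show "conj_fun F1 (inf \<phi>1 \<phi>2) + conj_fun F2 (sup \<phi>1 \<phi>2) \<le> ?R" using A B by simp
qed

end

theorem theorem2p50:
  fixes F1 F2 :: "('a::{banach,lattice} \<Rightarrow>\<^sub>L real) \<Rightarrow> ereal"
  assumes "banach_lattice TYPE('a)"
    and "proper_fun F1" and "proper_fun F2"
    and "Q_ll F2 F1"
  shows "P_ll (conj_fun F1) (conj_fun F2)
         \<and> (\<forall>F :: ('a \<Rightarrow>\<^sub>L real) \<Rightarrow> ereal.
               proper_fun F \<and> substitutable F \<longrightarrow> submodular (conj_fun F))"
  using Pll_main[OF assms(1) assms(4) assms(2) assms(3)] Pll_main[OF assms(1)]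
  unfolding substitutable_def submodular_def by blast

end
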